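(* Let $P$ be a finite poset. The map $\overline{\Lambda}:\mathrm{Hom}(P,\mathbb{N})\to\{\text{monomials of }k[x_P]\}$, $\phi\mapsto\overline{\Lambda}\phi$, is a bijection.
   Context: $\mathbb{N}=\{0,1,\dots\}$; $\mathrm{Hom}(P,\mathbb{N})$ is the set of isotone maps $P\to\mathbb{N}$. The ascent of $\phi$ is $\Lambda\phi=\{(p,i)\in P\times\mathbb{N}:\phi(q)\le i<\phi(p)\ \forall q<p\}$, and $\overline{\Lambda}\phi=\prod_{(p,i)\in\Lambda\phi}x_p$ in the polynomial ring $k[x_P]$ over a field $k$ (monomials of $k[x_P]$ are identified with elements $\sum_p n_pp$ of the free commutative monoid $\mathbb{N}P$). *)

theory Defs
  imports Main "HOL-Library.FuncSet" "HOL-Library.Multiset"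
begin

text \<open>Monomials of k[x_P] are identified with the free commutative monoid NP,
i.e. with finite multisets over P.\<close>

definition hom_nat :: "'a::order set \<Rightarrow> ('a \<Rightarrow> nat) set" where
  "hom_nat P = {\<phi>. \<phi> \<in> extensional P \<and> monotone_on P (\<le>) (\<le>) \<phi>}"

definition ascent :: "'a::order set \<Rightarrow> ('a \<Rightarrow> nat) \<Rightarrow> ('a \<times> nat) set" where
  "ascent P \<phi> = {(p, i). p \<in> P \<and> (\<forall>q\<in>P. q < p \<longrightarrow> \<phi> q \<le> i) \<and> i < \<phi> p}"

definition ascent_monomial :: "'a::order set \<Rightarrow> ('a \<Rightarrow> nat) \<Rightarrow> 'a multiset" where
  "ascent_monomial P \<phi> = image_mset fst (mset_set (ascent P \<phi>))"

definition monomials :: "'a set \<Rightarrow> 'a multiset set" where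
  "monomials P = {M. set_mset M \<subseteq> P}"

end

theory Submission
  imports Defs
begin

definition mx :: "'a::order set \<Rightarrow> ('a \<Rightarrow> nat) \<Rightarrow> 'a \<Rightarrow> nat" where
  "mx P \<phi> p = Max (insert 0 (\<phi> ` {q\<in>P. q < p}))"

lemma mx_le_iff: "finite P \<Longrightarrow> (mx P \<phi> p \<le> i) = (\<forall>q\<in>P. q < p \<longrightarrow> \<phi> q \<le> i)"
  unfolding mx_def by (subst Max_le_iff) auto

lemma mx_ge: "finite P \<Longrightarrow> q \<in> P \<Longrightarrow> q < p \<Longrightarrow> \<phi> q \<le> mx P \<phi> p"
  using mx_le_iff by blast

lemma finite_ascent: "finite P \<Longrightarrow> finite (ascent P \<phi>)"
proof -
  assume f: "finite P"
  have "ascent P \<phi> \<subseteq> Sigma P (\<lambda>p. {..<\<phi> p})" unfolding ascent_def by auto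
  moreover have "finite (Sigma P (\<lambda>p. {..<\<phi> p}))" using f by auto
  ultimately show ?thesis by (rule finite_subset)
qed

lemma count_asc:
  assumes f: "finite P"
  shows "count (ascent_monomial P \<phi>) p = (if p \<in> P then \<phi> p - mx P \<phi> p else 0)"
proof -
  have fa: "finite (ascent P \<phi>)" using f finite_ascent by blast
  have "count (ascent_monomial P \<phi>) p = sum (count (mset_set (ascent P \<phi>))) (fst -` {p} \<inter> ascent P \<phi>)"
    unfolding ascent_monomial_def count_image_mset using fa by simp
  also have "\<dots> = card (fst -` {p} \<inter> ascent P \<phi>)"
    using fa by (simp add: count_mset_set)
  also have "fst -` {p} \<inter> ascent P \<phi> = (if p \<in> P then {p} \<times> {mx P \<phi> p..<\<phi> p} else {})"
    unfolding ascent_def using mx_le_iff[OF f] by auto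
  finally show ?thesis by simp
qed

lemma hom_mono: "\<phi> \<in> hom_nat P \<Longrightarrow> q \<in> P \<Longrightarrow> p \<in> P \<Longrightarrow> q \<le> p \<Longrightarrow> \<phi> q \<le> \<phi> p"
  unfolding hom_nat_def by (auto dest: monotone_onD)

lemma count_asc_hom:
  assumes f: "finite P" and h: "\<phi> \<in> hom_nat P" and p: "p \<in> P"
  shows "\<phi> p = count (ascent_monomial P \<phi>) p + mx P \<phi> p"
proof -
  have "mx P \<phi> p \<le> \<phi> p" using mx_le_iff[OF f] hom_mono[OF h] p by (auto intro: less_imp_le)
  thus ?thesis using count_asc[OF f] p by simp
qed

lemma inj_part:
  assumes f: "finite P" and h1: "\<phi> \<in> hom_nat P" and h2: "\<psi> \<in> hom_nat P"
    and eq: "ascent_monomial P \<phi> = ascent_monomial P \<psi>"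
  shows "\<phi> = \<psi>"
proof -
  have main: "\<forall>p\<in>P. card {q\<in>P. q < p} = n \<longrightarrow> \<phi> p = \<psi> p" for n
  proof (induction n rule: less_induct)
    case (less n)
    show ?case
    proof (intro ballI impI)
      fix p assume p: "p \<in> P" and c: "card {q\<in>P. q < p} = n"
      have "\<phi> q = \<psi> q" if q: "q \<in> P" "q < p" for q
      proof -
        have "{r\<in>P. r < q} \<subset> {r\<in>P. r < p}" using q by (auto dest: less_trans)
        hence "card {r\<in>P. r < q} < n" using c f by (metis (no_types, lifting) finite_subset mem_Collect_eq psubset_card_mono subsetI)
        thus ?thesis using less q by blast
      qed
      hence "mx P \<phi> p = mx P \<psi> p" unfolding mx_def
        by (metis (mono_tags, lifting) image_cong mem_Collect_eq)
      thus "\<phi> p = \<psi> p" using count_asc_hom[OF f h1 p] count_asc_hom[OF f h2 p] eq by simp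
    qed
  qed
  show ?thesis
  proof
    fix p show "\<phi> p = \<psi> p"
    proof (cases "p \<in> P")
      case True thus ?thesis using main by blast
    next
      case False thus ?thesis using h1 h2 unfolding hom_nat_def extensional_def by auto
    qed
  qed
qed

lemma surj_part:
  assumes f: "finite P" and M: "set_mset M \<subseteq> P"
  shows "\<exists>\<phi>\<in>hom_nat P. ascent_monomial P \<phi> = M"
proof -
  define R where "R = {(q,p). q \<in> P \<and> p \<in> P \<and> q < p}"
  have wf: "wf R"
  proof (rule finite_acyclic_wf)
    have "R \<subseteq> P \<times> P" unfolding R_def by auto
    thus "finite R" using f by (meson finite_SigmaI finite_subset)
    have "trans R" unfolding R_def trans_def by (auto dest: less_trans)
    moreover have "irrefl R" unfolding R_def irrefl_def by auto
    ultimately show "acyclic R" by (simp add: acyclic_irrefl)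
  qed
  define F where "F = (\<lambda>g p. if p \<in> P then count M p + mx P g p else undefined)"
  define \<phi> where "\<phi> = wfrec R F"
  have adm: "adm_wf R F" unfolding adm_wf_def F_def mx_def R_def
  proof (intro allI impI)
    fix g h :: "'a \<Rightarrow> nat" and x
    assume a: "\<forall>z. (z, x) \<in> {(q, p). q \<in> P \<and> p \<in> P \<and> q < p} \<longrightarrow> g z = h z"
    show "(if x \<in> P then count M x + Max (insert 0 (g ` {q \<in> P. q < x})) else undefined) =
          (if x \<in> P then count M x + Max (insert 0 (h ` {q \<in> P. q < x})) else undefined)"
    proof (cases "x \<in> P")
      case True
      hence "g ` {q \<in> P. q < x} = h ` {q \<in> P. q < x}" using a by (intro image_cong) auto
      thus ?thesis by simp
    qed simp
  qed
  have eq: "\<phi> p = F \<phi> p" for p unfolding \<phi>_def using wfrec_fixpoint[OF wf adm] by metis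
  have ext: "\<phi> \<in> extensional P" unfolding extensional_def using eq F_def by auto
  have le: "\<phi> q \<le> \<phi> p" if "q \<in> P" "p \<in> P" "q < p" for p q
    using eq[of p] that mx_ge[OF f, of q p \<phi>] unfolding F_def by auto
  have h: "\<phi> \<in> hom_nat P" unfolding hom_nat_def
    using ext proof (intro conjI CollectI monotone_onI)
    fix x y assume "x \<in> P" "y \<in> P" "x \<le> y"
    thus "\<phi> x \<le> \<phi> y" using le[of x y] by (cases "x = y") (auto simp: order.order_iff_strict)
  qed
  have "ascent_monomial P \<phi> = M"
  proof (rule multiset_eqI)
    fix p show "count (ascent_monomial P \<phi>) p = count M p"
    proof (cases "p \<in> P")
      case True thus ?thesis using count_asc_hom[OF f h True] eq[of p] unfolding F_def by simp
    next
      case False thus ?thesis using count_asc[OF f] M by (auto simp: count_eq_zero_iff)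
    qed
  qed
  thus ?thesis using h by blast
qed

theorem proposition3p3:
  fixes P :: "'a::order set"
  assumes "finite P"
  shows "bij_betw (ascent_monomial P) (hom_nat P) (monomials P)"
proof -
  have "ascent_monomial P \<phi> \<in> monomials P" for \<phi>
    unfolding monomials_def using count_asc[OF assms, of \<phi>]
    by (auto simp flip: count_greater_zero_iff split: if_splits)
  moreover have "M \<in> ascent_monomial P ` hom_nat P" if "M \<in> monomials P" for M
    using surj_part[OF assms, of M] that unfolding monomials_def by force
  ultimately show ?thesis unfolding bij_betw_def inj_on_def
    using inj_part[OF assms] by blast
qed

end
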